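(* Let $C\subset\mathbb{R}^d$ be a convex body and let $\Lambda\subset\mathbb{R}^d$ be a $d$-dimensional lattice. The following are equivalent: (1) $C$ is lattice reduced with respect to $\Lambda$; (2) for every exposed point $p$ of $C$ there exists a width direction $y\in\Lambda^\star$ of $C$ such that $y\cdot p>y\cdot x$ for all $x\in C\setminus\{p\}$.
   Context: A convex body is a compact convex set with non-empty interior. An exposed point of $C$ is a point $p$ such that $C\cap H=\{p\}$ for some supporting hyperplane $H$ of $C$. A lattice $\Lambda\subset\mathbb{R}^d$ is a discrete subgroup spanning $\mathbb{R}^d$; $\Lambda^\star=\{y: x\cdot y\in\mathbb{Z}\ \forall x\in\Lambda\}$. The lattice width is $\mathrm{wdt}_\Lambda(C)=\min_{y\in\Lambda^\star\setminus\{0\}}\max_{a,b\in C}y\cdot(a-b)$; a width direction is a $y\in\Lambda^\star\setminus\{0\}$ attaining this minimum. $C$ is lattice reduced if no convex body $C'\subsetneq C$ has $\mathrm{wdt}_\Lambda(C')=\mathrm{wdt}_\Lambda(C)$. *)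

theory Defs
  imports "HOL-Analysis.Analysis"
begin

definition convex_body :: "'a::euclidean_space set \<Rightarrow> bool" where
  "convex_body C \<longleftrightarrow> compact C \<and> convex C \<and> interior C \<noteq> {}"

definition is_lattice :: "'a::euclidean_space set \<Rightarrow> bool" where
  "is_lattice L \<longleftrightarrow> 0 \<in> L \<and> (\<forall>x\<in>L. \<forall>y\<in>L. x - y \<in> L)
     \<and> (\<exists>e>0. \<forall>x\<in>L. norm x < e \<longrightarrow> x = 0) \<and> span L = UNIV"

definition dual_lattice :: "'a::euclidean_space set \<Rightarrow> 'a set" where
  "dual_lattice L = {y. \<forall>x\<in>L. x \<bullet> y \<in> \<int>}"

definition width_in_dir :: "'a::euclidean_space set \<Rightarrow> 'a \<Rightarrow> real" where
  "width_in_dir C y = Sup {y \<bullet> (a - b) | a b. a \<in> C \<and> b \<in> C}"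

definition lattice_width :: "'a::euclidean_space set \<Rightarrow> 'a set \<Rightarrow> real" where
  "lattice_width L C = Inf (width_in_dir C ` (dual_lattice L - {0}))"

definition width_direction :: "'a::euclidean_space set \<Rightarrow> 'a set \<Rightarrow> 'a \<Rightarrow> bool" where
  "width_direction L C y \<longleftrightarrow> y \<in> dual_lattice L - {0} \<and> width_in_dir C y = lattice_width L C"

definition lattice_reduced :: "'a::euclidean_space set \<Rightarrow> 'a set \<Rightarrow> bool" where
  "lattice_reduced L C \<longleftrightarrow>
     \<not> (\<exists>C'. convex_body C' \<and> C' \<subset> C \<and> lattice_width L C' = lattice_width L C)"

end

theory Submission
  imports Defs
begin



lemma width_set_eq:
  "{y \<bullet> (a - b) |a b. a \<in> K \<and> b \<in> K} = (\<lambda>(a,b). y \<bullet> (a - b)) ` (K \<times> K)"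
  by auto

lemma width_props:
  fixes K :: "'a::euclidean_space set"
  assumes "compact K" "K \<noteq> {}"
  shows "\<exists>a\<in>K. \<exists>b\<in>K. width_in_dir K y = y \<bullet> (a - b)"
    and "\<And>a b. a \<in> K \<Longrightarrow> b \<in> K \<Longrightarrow> y \<bullet> (a - b) \<le> width_in_dir K y"
proof -
  let ?f = "\<lambda>z::'a\<times>'a. y \<bullet> (fst z - snd z)"
  have eqS: "(\<lambda>(a,b). y \<bullet> (a - b)) ` (K \<times> K) = ?f ` (K \<times> K)"
    by (simp add: case_prod_unfold)
  have ct: "continuous_on (K \<times> K) ?f"
    by (intro continuous_intros)
  have cS: "compact (?f ` (K \<times> K))"
    by (rule compact_continuous_image[OF ct compact_Times[OF assms(1) assms(1)]])
  have ne: "?f ` (K \<times> K) \<noteq> {}" using assms(2) by simp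
  have bdd: "bdd_above (?f ` (K \<times> K))"
    by (rule bounded_imp_bdd_above[OF compact_imp_bounded[OF cS]])
  have "Sup (?f ` (K \<times> K)) \<in> ?f ` (K \<times> K)"
    by (rule closed_contains_Sup[OF ne bdd compact_imp_closed[OF cS]])
  then show "\<exists>a\<in>K. \<exists>b\<in>K. width_in_dir K y = y \<bullet> (a - b)"
    unfolding width_in_dir_def width_set_eq eqS by force
  fix a b assume "a \<in> K" "b \<in> K"
  then have "y \<bullet> (a - b) \<in> ?f ` (K \<times> K)"
    by (metis (no_types, lifting) SigmaI fst_conv image_eqI snd_conv)
  then show "y \<bullet> (a - b) \<le> width_in_dir K y"
    unfolding width_in_dir_def width_set_eq eqS
    by (rule cSup_upper[OF _ bdd])
qed
lemma width_mono:
  fixes K :: "'a::euclidean_space set"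
  assumes "compact K" "compact K'" "K' \<noteq> {}" "K' \<subseteq> K"
  shows "width_in_dir K' y \<le> width_in_dir K y"
proof -
  obtain a b where ab: "a \<in> K'" "b \<in> K'" "width_in_dir K' y = y \<bullet> (a - b)"
    using width_props(1)[OF assms(2,3), of y] by blast
  have "a \<in> K" "b \<in> K" using ab assms(4) by auto
  moreover have "K \<noteq> {}" using ab(1) assms(4) by auto
  ultimately have "y \<bullet> (a - b) \<le> width_in_dir K y" using width_props(2)[OF assms(1)] by blast
  then show ?thesis using ab(3) by simp
qed

lemma width_nonneg:
  fixes K :: "'a::euclidean_space set"
  assumes "compact K" "K \<noteq> {}"
  shows "0 \<le> width_in_dir K y"
proof -
  obtain a where "a \<in> K" using assms(2) by blast
  then have "y \<bullet> (a - a) \<le> width_in_dir K y" by (intro width_props(2)[OF assms])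
  then show ?thesis by simp
qed

lemma width_neg:
  "width_in_dir K (-y) = width_in_dir K y"
proof -
  have "{(-y) \<bullet> (a - b) |a b. a \<in> K \<and> b \<in> K} = {y \<bullet> (a - b) |a b. a \<in> K \<and> b \<in> K}"
  proof (intro set_eqI iffI)
    fix z assume "z \<in> {(-y) \<bullet> (a - b) |a b. a \<in> K \<and> b \<in> K}"
    then obtain a b where "a \<in> K" "b \<in> K" "z = (-y) \<bullet> (a - b)" by blast
    moreover have "z = y \<bullet> (b - a)" using \<open>z = (-y) \<bullet> (a - b)\<close> by (simp add: algebra_simps)
    ultimately show "z \<in> {y \<bullet> (a - b) |a b. a \<in> K \<and> b \<in> K}" by blast
  next
    fix z assume "z \<in> {y \<bullet> (a - b) |a b. a \<in> K \<and> b \<in> K}"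
    then obtain a b where "a \<in> K" "b \<in> K" "z = y \<bullet> (a - b)" by blast
    moreover have "z = (-y) \<bullet> (b - a)" using \<open>z = y \<bullet> (a - b)\<close> by (simp add: algebra_simps)
    ultimately show "z \<in> {(-y) \<bullet> (a - b) |a b. a \<in> K \<and> b \<in> K}" by blast
  qed
  then show ?thesis unfolding width_in_dir_def by simp
qed

lemma dual_neg: "y \<in> dual_lattice L \<Longrightarrow> -y \<in> dual_lattice L"
  unfolding dual_lattice_def by auto


lemma farthest_exposed:
  fixes C :: "'a::euclidean_space set"
  assumes "compact C" "convex C" "C \<noteq> {}"
  shows "\<exists>p\<in>C. {p} exposed_face_of C \<and> (\<forall>x\<in>C. norm (x - z) \<le> norm (p - z))"
proof -
  have "continuous_on C (\<lambda>x. norm (x - z))" by (intro continuous_intros)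
  then obtain p where p: "p \<in> C" "\<forall>x\<in>C. norm (x - z) \<le> norm (p - z)"
    using continuous_attains_sup[OF assms(1) assms(3)] by blast
  define a where "a = p - z"
  have le: "a \<bullet> x \<le> a \<bullet> p" if "x \<in> C" for x
  proof -
    have "a \<bullet> (x - z) \<le> norm a * norm (x - z)" by (rule norm_cauchy_schwarz)
    also have "\<dots> \<le> norm a * norm a" using p(2) that by (simp add: a_def mult_left_mono)
    also have "\<dots> = a \<bullet> (p - z)" by (simp add: a_def dot_square_norm power2_eq_square)
    finally show ?thesis by (simp add: inner_diff_right)
  qed
  have eq: "C \<inter> {x. a \<bullet> x = a \<bullet> p} = {p}"
  proof (intro set_eqI iffI)
    fix x assume x: "x \<in> C \<inter> {x. a \<bullet> x = a \<bullet> p}"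
    have n: "norm (x - z) \<le> norm a" using p(2) x by (simp add: a_def)
    have ax: "a \<bullet> (x - z) = a \<bullet> a" using x by (simp add: a_def inner_diff_right)
    define v where "v = x - z"
    have vv: "v \<bullet> v \<le> a \<bullet> a" using n
      by (simp add: v_def dot_square_norm power_mono)
    have "(v - a) \<bullet> (v - a) = v \<bullet> v - 2 * (a \<bullet> v) + a \<bullet> a"
      by (simp add: inner_diff_left inner_diff_right inner_commute[of v a])
    also have "\<dots> \<le> 0" using vv ax by (simp add: v_def)
    finally have "(x - z - a) \<bullet> (x - z - a) \<le> 0" by (simp add: v_def)
    then have "x - z - a = 0" by (metis inner_eq_zero_iff order_antisym inner_ge_zero)
    then show "x \<in> {p}" by (simp add: a_def)
  next
    fix x assume "x \<in> {p}"
    then show "x \<in> C \<inter> {x. a \<bullet> x = a \<bullet> p}" using p(1) by simp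
  qed
  have "(C \<inter> {x. a \<bullet> x = a \<bullet> p}) exposed_face_of C"
    by (rule exposed_face_of_Int_supporting_hyperplane_le) (use assms le in auto)
  then have ex: "{p} exposed_face_of C" by (simp only: eq)
  show ?thesis
  proof (rule bexI[of _ p])
    show "{p} exposed_face_of C \<and> (\<forall>x\<in>C. norm (x - z) \<le> norm (p - z))"
      using ex p(2) by (intro conjI)
  qed (rule p(1))
qed



lemma dual_finite:
  fixes L :: "'a::euclidean_space set"
  assumes sp: "span L = UNIV"
  shows "finite {y \<in> dual_lattice L. norm y \<le> R}"
proof -
  obtain B where B: "B \<subseteq> L" "independent B" "L \<subseteq> span B"
    by (rule maximal_independent_subset)
  have fB: "finite B" using independent_bound[OF B(2)] by blast
  have spB: "span B = UNIV"
    using span_mono[OF B(3)] sp by (simp add: span_span top_unique)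
  define S where "S = {y \<in> dual_lattice L. norm y \<le> R}"
  define N :: int where "N = \<lceil>R * (\<Sum>b\<in>B. norm b)\<rceil>"
  define g where "g = (\<lambda>y. restrict (\<lambda>b. \<lfloor>b \<bullet> y\<rfloor>) B)"
  have intg: "b \<bullet> y = of_int \<lfloor>b \<bullet> y\<rfloor>" if "b \<in> B" "y \<in> dual_lattice L" for b y
  proof -
    have "b \<bullet> y \<in> \<int>" using that B(1) unfolding dual_lattice_def by auto
    then obtain k where "b \<bullet> y = of_int k" by (rule Ints_cases)
    then show ?thesis by simp
  qed
  have inj: "inj_on g S"
  proof (rule inj_onI)
    fix y y' assume y: "y \<in> S" "y' \<in> S" "g y = g y'"
    have o: "orthogonal (y - y') b" if "b \<in> B" for b
    proof -
      have "\<lfloor>b \<bullet> y\<rfloor> = \<lfloor>b \<bullet> y'\<rfloor>"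
        using fun_cong[OF y(3), of b] that by (simp add: g_def)
      moreover have "y \<in> dual_lattice L" "y' \<in> dual_lattice L" using y(1,2) by (auto simp: S_def)
      ultimately have "b \<bullet> y = b \<bullet> y'" using intg[OF that] by metis
      then show ?thesis by (simp add: orthogonal_def inner_diff_left inner_diff_right inner_commute)
    qed
    have "orthogonal (y - y') (y - y')"
      by (rule orthogonal_to_span[of _ B]) (use spB o in auto)
    then show "y = y'" by (simp add: orthogonal_def)
  qed
  have sub: "g ` S \<subseteq> (\<Pi>\<^sub>E b\<in>B. {-N..N})"
  proof
    fix z assume "z \<in> g ` S"
    then obtain y where y: "y \<in> S" "z = g y" by blast
    have "\<lfloor>b \<bullet> y\<rfloor> \<in> {-N..N}" if b: "b \<in> B" for b
    proof -
      have "\<bar>b \<bullet> y\<bar> \<le> norm b * norm y" by (rule Cauchy_Schwarz_ineq2)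
      also have "\<dots> \<le> norm b * R" using y(1) by (simp add: S_def mult_left_mono)
      also have "\<dots> \<le> (\<Sum>b\<in>B. norm b) * R"
      proof (rule mult_right_mono)
        show "norm b \<le> (\<Sum>b\<in>B. norm b)"
          by (rule member_le_sum[OF b _ fB]) simp
        have "norm y \<le> R" using y(1) by (simp add: S_def)
        then show "0 \<le> R" using norm_ge_zero[of y] by linarith
      qed
      finally have "\<bar>b \<bullet> y\<bar> \<le> R * (\<Sum>b\<in>B. norm b)" by (simp add: mult.commute)
      then have "\<bar>b \<bullet> y\<bar> \<le> of_int N" unfolding N_def by linarith
      then show ?thesis by (simp add: abs_le_iff; linarith)
    qed
    then show "z \<in> (\<Pi>\<^sub>E b\<in>B. {-N..N})" using y by (auto simp: g_def)
  qed
  have "finite (\<Pi>\<^sub>E b\<in>B. {-N..N})" by (rule finite_PiE[OF fB]) simp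
  then have "finite (g ` S)" using sub by (rule finite_subset[rotated])
  then show ?thesis using inj finite_imageD unfolding S_def by blast
qed



lemma ball_avoid:
  fixes C :: "'a::euclidean_space set"
  assumes "interior C \<noteq> {}"
  obtains c r where "r > 0" "ball c r \<subseteq> C" "c \<noteq> p"
proof -
  obtain c0 where c0: "c0 \<in> interior C" using assms by blast
  then obtain r0 where r0: "r0 > 0" "ball c0 r0 \<subseteq> C"
    by (meson interior_subset open_contains_ball_eq open_interior order_trans)
  show ?thesis
  proof (cases "c0 = p")
    case False
    then show ?thesis using that r0 by blast
  next
    case True
    obtain e :: 'a where e: "e \<in> Basis" using nonempty_Basis by blast
    define c where "c = c0 + (r0/2) *\<^sub>R e"
    have "ball c (r0/2) \<subseteq> ball c0 r0"
    proof
      fix x assume "x \<in> ball c (r0/2)"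
      then have "dist c x < r0/2" by simp
      moreover have "dist c0 c = r0/2" using e r0 by (simp add: c_def dist_norm)
      ultimately have "dist c0 x < r0" using dist_triangle[of c0 x c] by linarith
      then show "x \<in> ball c0 r0" by simp
    qed
    moreover have "c \<noteq> p"
    proof
      assume "c = p"
      then have "(r0/2) *\<^sub>R e = 0" using True by (simp add: c_def)
      then show False using e r0 by simp
    qed
    ultimately show ?thesis using that r0 by (meson half_gt_zero order_trans)
  qed
qed

lemma width_lower:
  fixes C :: "'a::euclidean_space set"
  assumes "compact C" "r > 0" "ball c r \<subseteq> C"
  shows "r * norm y \<le> width_in_dir C y"
proof -
  define a where "a = c + (r / (2 * norm y)) *\<^sub>R y"
  define b where "b = c - (r / (2 * norm y)) *\<^sub>R y"
  have "a \<in> ball c r" "b \<in> ball c r"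
  proof -
    have "norm ((r / (2 * norm y)) *\<^sub>R y) < r"
    proof (cases "y = 0")
      case False
      then have "norm ((r / (2 * norm y)) *\<^sub>R y) = r / 2" using assms(2) by simp
      then show ?thesis using assms(2) by simp
    qed (use assms(2) in simp)
    then show "a \<in> ball c r" "b \<in> ball c r" by (simp_all add: a_def b_def dist_norm)
  qed
  then have ab: "a \<in> C" "b \<in> C" using assms(3) by auto
  then have ne: "C \<noteq> {}" by auto
  have "y \<bullet> (a - b) = r * norm y"
  proof (cases "y = 0")
    case False
    have "a - b = (r / norm y) *\<^sub>R y" by (simp add: a_def b_def scaleR_2 [symmetric] algebra_simps)
    then have "y \<bullet> (a - b) = (r / norm y) * (y \<bullet> y)" by simp
    also have "\<dots> = r * norm y" using False by (simp add: dot_square_norm power2_eq_square)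
    finally show ?thesis .
  qed (simp add: a_def b_def)
  moreover have "y \<bullet> (a - b) \<le> width_in_dir C y" by (rule width_props(2)[OF assms(1) ne ab])
  ultimately show ?thesis by simp
qed



lemma dir_2_1:
  fixes C L :: "'a::euclidean_space set"
  assumes cb: "convex_body C"
    and H: "\<forall>p. {p} exposed_face_of C \<longrightarrow>
       (\<exists>y. width_direction L C y \<and> (\<forall>x\<in>C - {p}. y \<bullet> p > y \<bullet> x))"
  shows "lattice_reduced L C"
  unfolding lattice_reduced_def
proof
  assume "\<exists>C'. convex_body C' \<and> C' \<subset> C \<and> lattice_width L C' = lattice_width L C"
  then obtain C' where C': "convex_body C'" "C' \<subset> C" "lattice_width L C' = lattice_width L C"
    by blast
  have cC: "compact C" "convex C" using cb by (auto simp: convex_body_def)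
  have cC': "compact C'" "convex C'" "C' \<noteq> {}"
    using C'(1) interior_subset[of C'] by (auto simp: convex_body_def)
  obtain q where q: "q \<in> C" "q \<notin> C'" using C'(2) by blast
  obtain a b where ab: "a \<bullet> q < b" "\<forall>x\<in>C'. a \<bullet> x > b"
    using separating_hyperplane_closed_point[OF cC'(2) compact_imp_closed[OF cC'(1)] q(2)] by blast
  obtain B0 where B0: "\<forall>x\<in>C. norm x \<le> B0"
    using compact_imp_bounded[OF cC(1)] by (auto simp: bounded_iff)
  define D where "D = 2 * B0"
  have Dx: "norm (x - q) \<le> D" if "x \<in> C" for x
  proof -
    have "norm x \<le> B0" "norm q \<le> B0" using B0 that q(1) by auto
    then show ?thesis using norm_triangle_ineq4[of x q] unfolding D_def by linarith
  qed
  define g where "g = b - a \<bullet> q"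
  have g: "g > 0" using ab(1) by (simp add: g_def)
  define t where "t = (D^2 + 1) / (2 * g)"
  have t: "2 * t * g = D^2 + 1" using g by (simp add: t_def)
  define z where "z = q + t *\<^sub>R a"
  obtain p where p: "p \<in> C" "{p} exposed_face_of C" "\<forall>x\<in>C. norm (x - z) \<le> norm (p - z)"
    using farthest_exposed[OF cC(1) cC(2), of z] q(1) by blast
  have pC': "p \<notin> C'"
  proof
    assume pin: "p \<in> C'"
    define v where "v = p - q"
    have av: "a \<bullet> v > g" using ab(2) pin by (simp add: v_def g_def inner_diff_right)
    have vv: "v \<bullet> v \<le> D^2"
    proof -
      have "norm v \<le> D" using Dx[OF p(1)] by (simp add: v_def)
      then have "norm v ^ 2 \<le> D ^ 2" by (simp add: power_mono)
      then show ?thesis by (simp add: dot_square_norm)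
    qed
    have "(p - z) \<bullet> (p - z) = v \<bullet> v - 2 * t * (a \<bullet> v) + t^2 * (a \<bullet> a)"
      by (simp add: z_def v_def algebra_simps inner_diff_left inner_diff_right inner_add_left inner_add_right
          inner_commute power2_eq_square)
    also have "\<dots> < t^2 * (a \<bullet> a)"
    proof -
      have "D^2 + 1 > 0" by (simp add: add_nonneg_pos)
      then have "t > 0" using g by (simp add: t_def)
      then have "2 * t * (a \<bullet> v) > 2 * t * g" using av by simp
      then show ?thesis using vv t by linarith
    qed
    also have "\<dots> = (q - z) \<bullet> (q - z)" by (simp add: z_def power2_eq_square)
    finally have lt: "norm (p - z) ^ 2 < norm (q - z) ^ 2" by (simp add: dot_square_norm)
    have "norm (q - z) \<le> norm (p - z)" using p(3) q(1) by blast
    then have "norm (q - z) ^ 2 \<le> norm (p - z) ^ 2" by (simp add: power_mono)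
    then show False using lt by linarith
  qed
  obtain y where y: "width_direction L C y" "\<forall>x\<in>C - {p}. y \<bullet> p > y \<bullet> x"
    using H p(2) by blast
  obtain a' b' where a'b': "a' \<in> C'" "b' \<in> C'" "width_in_dir C' y = y \<bullet> (a' - b')"
    using width_props(1)[OF cC'(1) cC'(3), of y] by blast
  have "a' \<in> C" "b' \<in> C" "a' \<noteq> p" using a'b' C'(2) pC' by auto
  then have "y \<bullet> a' < y \<bullet> p" using y(2) by blast
  then have "width_in_dir C' y < y \<bullet> (p - b')" using a'b'(3) by (simp add: inner_diff_right)
  also have "\<dots> \<le> width_in_dir C y"
    using width_props(2)[OF cC(1)] p(1) \<open>b' \<in> C\<close> by blast
  also have "\<dots> = lattice_width L C" using y(1) by (simp add: width_direction_def)
  finally have lt: "width_in_dir C' y < lattice_width L C" .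
  have "lattice_width L C' \<le> width_in_dir C' y"
    unfolding lattice_width_def
  proof (rule cInf_lower)
    show "width_in_dir C' y \<in> width_in_dir C' ` (dual_lattice L - {0})"
      using y(1) by (simp add: width_direction_def)
    show "bdd_below (width_in_dir C' ` (dual_lattice L - {0}))"
      using width_nonneg[OF cC'(1) cC'(3)] by (auto intro!: bdd_belowI[of _ 0])
  qed
  then show False using lt C'(3) by linarith
qed



lemma dir_1_2:
  fixes C L :: "'a::euclidean_space set"
  assumes cb: "convex_body C" and lat: "is_lattice L"
    and R: "lattice_reduced L C" and ex: "{p} exposed_face_of C"
  shows "\<exists>y. width_direction L C y \<and> (\<forall>x\<in>C - {p}. y \<bullet> p > y \<bullet> x)"
proof (rule ccontr)
  assume N: "\<not> (\<exists>y. width_direction L C y \<and> (\<forall>x\<in>C - {p}. y \<bullet> p > y \<bullet> x))"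
  have cC: "compact C" "convex C" "interior C \<noteq> {}" using cb by (auto simp: convex_body_def)
  have sp: "span L = UNIV" using lat by (simp add: is_lattice_def)
  obtain c r where cr: "r > 0" "ball c r \<subseteq> C" "c \<noteq> p"
    using ball_avoid[OF cC(3)] by blast
  have cinC: "c \<in> C" using cr by auto
  have CNE: "C \<noteq> {}" using cinC by auto
  let ?w = "width_in_dir C"
  let ?D = "dual_lattice L - {0}"
  have lower: "r * norm y \<le> ?w y" for y by (rule width_lower[OF cC(1) cr(1) cr(2)])
  show False
  proof (cases "?D = {}")
    case True
    define C' where "C' = cball c (r/2)"
    obtain e :: 'a where e: "e \<in> Basis" using nonempty_Basis by blast
    have "convex_body C'"
      using cr(1) by (auto simp: convex_body_def C'_def)
    moreover have "C' \<subset> C"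
    proof
      show "C' \<subseteq> C" using cr by (auto simp: C'_def)
      define x0 where "x0 = c + (3 * r / 4) *\<^sub>R e"
      have d: "dist c x0 = 3 * r / 4" using e cr(1) by (simp add: x0_def dist_norm)
      then have "x0 \<in> C" using cr by auto
      moreover have "x0 \<notin> C'" using d cr(1) by (simp add: C'_def)
      ultimately show "C' \<noteq> C" by blast
    qed
    moreover have "lattice_width L C' = lattice_width L C"
      unfolding lattice_width_def True by simp
    ultimately show False using R by (auto simp: lattice_reduced_def)
  next
    case False
    then obtain y0 where y0: "y0 \<in> ?D" by blast
    define w0 where "w0 = ?w y0"
    define F where "F = {y \<in> dual_lattice L. norm y \<le> (w0 + 1) / r} - {0}"
    have fF: "finite F" unfolding F_def using dual_finite[OF sp] by blast
    have y0F: "y0 \<in> F"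
    proof -
      have "r * norm y0 \<le> w0" using lower by (simp add: w0_def)
      then have "norm y0 \<le> (w0 + 1) / r" using cr(1) by (simp add: field_simps)
      then show ?thesis using y0 by (simp add: F_def)
    qed
    have outF: "?w y > w0 + 1" if "y \<in> ?D" "y \<notin> F" for y
    proof -
      have "norm y > (w0 + 1) / r" using that by (auto simp: F_def)
      then have "r * norm y > w0 + 1" using cr(1) by (simp add: field_simps)
      then show ?thesis using lower[of y] by linarith
    qed
    define m where "m = Min (?w ` F)"
    have mle: "m \<le> ?w y" if "y \<in> F" for y using fF that by (simp add: m_def)
    have "m \<in> ?w ` F" unfolding m_def using fF y0F by (intro Min_in) auto
    then obtain y1 where y1: "y1 \<in> F" "?w y1 = m" by force
    have FD: "F \<subseteq> ?D" by (auto simp: F_def)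
    have mall: "m \<le> ?w y" if "y \<in> ?D" for y
    proof (cases "y \<in> F")
      case True then show ?thesis by (rule mle)
    next
      case False
      then show ?thesis using outF[OF that False] mle[OF y0F] by (simp add: w0_def)
    qed
    have LW: "lattice_width L C = m"
      unfolding lattice_width_def
      by (rule cInf_eq_minimum) (use y1 FD mall in auto)
    have mpos: "m > 0"
    proof -
      have "y1 \<noteq> 0" using y1(1) by (simp add: F_def)
      then have "r * norm y1 > 0" using cr(1) by simp
      then show ?thesis using lower[of y1] y1(2) by linarith
    qed
    define W where "W = {y \<in> ?D. ?w y = m}"
    have WF: "W \<subseteq> F"
    proof
      fix y assume y: "y \<in> W"
      show "y \<in> F"
      proof (rule ccontr)
        assume "y \<notin> F"
        then have "?w y > w0 + 1" using outF y by (auto simp: W_def)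
        then show False using y mle[OF y0F] by (simp add: W_def w0_def)
      qed
    qed
    have fW: "finite W" using finite_subset[OF WF fF] .
    have y1W: "y1 \<in> W" using y1 FD by (auto simp: W_def)
    define G where "G = {y \<in> F. ?w y \<noteq> m}"
    have fG: "finite G" using fF by (simp add: G_def)
    define w2 where "w2 = Min (insert (m + 1) (?w ` G))"
    have w2m: "m < w2"
    proof -
      have "\<forall>a\<in>insert (m + 1) (?w ` G). m < a"
      proof
        fix a assume "a \<in> insert (m + 1) (?w ` G)"
        then show "m < a"
        proof
          assume "a = m + 1" then show ?thesis by simp
        next
          assume "a \<in> ?w ` G"
          then obtain y where "y \<in> G" "a = ?w y" by blast
          then show ?thesis using mle[of y] by (force simp: G_def)
        qed
      qed
      then show ?thesis unfolding w2_def using fG by simp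
    qed
    have w2le: "w2 \<le> ?w y" if "y \<in> ?D" "?w y \<noteq> m" for y
    proof (cases "y \<in> F")
      case True
      then have "y \<in> G" using that by (simp add: G_def)
      then show ?thesis unfolding w2_def using fG by simp
    next
      case False
      have "w2 \<le> m + 1" unfolding w2_def using fG by simp
      then show ?thesis using outF[OF that(1) False] mle[OF y0F] by (simp add: w0_def)
    qed
    obtain u \<beta> where ub: "C \<subseteq> {x. u \<bullet> x \<le> \<beta>}" "{p} = C \<inter> {x. u \<bullet> x = \<beta>}"
      using ex by (auto simp: exposed_face_of_def)
    have pC: "p \<in> C" "u \<bullet> p = \<beta>" using ub(2) by blast+
    have ult: "u \<bullet> x < \<beta>" if "x \<in> C" "x \<noteq> p" for x
    proof -
      have "u \<bullet> x \<le> \<beta>" using ub(1) that(1) by blast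
      moreover have "u \<bullet> x \<noteq> \<beta>" using ub(2) that by blast
      ultimately show ?thesis by simp
    qed
    have WP: "\<exists>ab. fst ab \<in> C - {p} \<and> snd ab \<in> C - {p} \<and> m \<le> y \<bullet> (fst ab - snd ab)"
      if yW: "y \<in> W" for y
    proof -
      have wd: "width_direction L C y" using yW LW by (simp add: W_def width_direction_def)
      have ynD: "-y \<in> ?D" using yW dual_neg[of y L] by (auto simp: W_def)
      have wdn: "width_direction L C (-y)" using ynD yW LW width_neg[of C y]
        by (simp add: W_def width_direction_def)
      obtain x where x: "x \<in> C - {p}" "y \<bullet> x \<ge> y \<bullet> p" using N wd by (auto simp: not_less)
      have N': "\<forall>y. width_direction L C y \<longrightarrow> (\<exists>x\<in>C - {p}. y \<bullet> p \<le> y \<bullet> x)"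
        using N by (auto simp: not_less)
      have "\<exists>x\<in>C - {p}. (-y) \<bullet> p \<le> (-y) \<bullet> x" using N' wdn by blast
      then obtain x' where x': "x' \<in> C - {p}" "(-y) \<bullet> x' \<ge> (-y) \<bullet> p" by blast
      obtain a0 b0 where ab0: "a0 \<in> C" "b0 \<in> C" "?w y = y \<bullet> (a0 - b0)"
        using width_props(1)[OF cC(1) CNE, of y] by blast
      define a where "a = (if a0 = p then x else a0)"
      define b where "b = (if b0 = p then x' else b0)"
      have "a \<in> C - {p}" "b \<in> C - {p}" using x x' ab0 by (auto simp: a_def b_def)
      moreover have "y \<bullet> a \<ge> y \<bullet> a0" using x by (simp add: a_def)
      moreover have "y \<bullet> b \<le> y \<bullet> b0" using x' by (simp add: b_def)
      moreover have "?w y = m" using yW by (simp add: W_def)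
      ultimately have "fst (a, b) \<in> C - {p} \<and> snd (a, b) \<in> C - {p} \<and> m \<le> y \<bullet> (fst (a, b) - snd (a, b))"
        using ab0(3) by (simp add: inner_diff_right)
      then show ?thesis by blast
    qed
    then have "\<forall>y\<in>W. \<exists>ab. fst ab \<in> C - {p} \<and> snd ab \<in> C - {p} \<and> m \<le> y \<bullet> (fst ab - snd ab)"
      by blast
    from bchoice[OF this] obtain AB where AB: "\<forall>y\<in>W. fst (AB y) \<in> C - {p} \<and> snd (AB y) \<in> C - {p} \<and> m \<le> y \<bullet> (fst (AB y) - snd (AB y))"
      by (elim exE)
    define P0 where "P0 = fst ` AB ` W \<union> snd ` AB ` W"
    have fP0: "finite P0" using fW by (simp add: P0_def)
    have P0C: "P0 \<subseteq> C - {p}" using AB by (auto simp: P0_def)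
    define \<delta> where "\<delta> = Min (insert 1 ((\<lambda>x. \<beta> - u \<bullet> x) ` P0))"
    have \<delta>pos: "\<delta> > 0"
    proof -
      have "\<forall>a\<in>insert 1 ((\<lambda>x. \<beta> - u \<bullet> x) ` P0). 0 < a"
        using P0C ult by auto
      then show ?thesis unfolding \<delta>_def using fP0 by simp
    qed
    have \<delta>le: "u \<bullet> x \<le> \<beta> - \<delta>" if "x \<in> P0" for x
    proof -
      have "\<delta> \<le> \<beta> - u \<bullet> x" unfolding \<delta>_def using fP0 that by simp
      then show ?thesis by simp
    qed
    define lam where "lam = (w2 - m) / (2 * w2)"
    have w2pos: "w2 > 0" using w2m mpos by simp
    have lam: "0 < lam" "lam < 1" using w2m w2pos mpos by (auto simp: lam_def field_simps)
    have lamw: "(1 - lam) * w2 \<ge> m"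
    proof -
      have "(1 - lam) * w2 = (w2 + m) / 2" using w2pos by (simp add: lam_def field_simps)
      then show ?thesis using w2m by simp
    qed
    define gc where "gc = \<beta> - u \<bullet> c"
    have gc: "gc > 0" using ult[OF cinC cr(3)] by (simp add: gc_def)
    define \<epsilon> where "\<epsilon> = min (lam * gc) \<delta>"
    have \<epsilon>: "\<epsilon> > 0" "\<epsilon> \<le> lam * gc" "\<epsilon> \<le> \<delta>" using lam gc \<delta>pos by (auto simp: \<epsilon>_def)
    define C' where "C' = C \<inter> {x. u \<bullet> x \<le> \<beta> - \<epsilon>}"
    define f where "f = (\<lambda>x. c + (1 - lam) *\<^sub>R (x - c))"
    have fC: "f x \<in> C'" if "x \<in> C" for x
    proof -
      have feq: "f x = lam *\<^sub>R c + (1 - lam) *\<^sub>R x" by (simp add: f_def algebra_simps)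
      have "f x \<in> C" unfolding feq using lam by (intro convexD[OF cC(2) cinC that]) auto
      moreover have "u \<bullet> f x \<le> \<beta> - \<epsilon>"
      proof -
        have "u \<bullet> x \<le> \<beta>" using ub(1) that by blast
        then have "(1 - lam) * (u \<bullet> x) \<le> (1 - lam) * \<beta>" using lam by (simp add: mult_left_mono)
        moreover have "u \<bullet> f x = lam * (u \<bullet> c) + (1 - lam) * (u \<bullet> x)"
          unfolding feq by (simp add: inner_add_right)
        ultimately have "u \<bullet> f x \<le> \<beta> - lam * gc" by (simp add: gc_def algebra_simps)
        then show ?thesis using \<epsilon>(2) by linarith
      qed
      ultimately show ?thesis by (simp add: C'_def)
    qed
    have cC': "compact C'" unfolding C'_def
      by (rule compact_Int_closed[OF cC(1) closed_halfspace_le])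
    have C'ne: "C' \<noteq> {}" using fC[OF cinC] by blast
    have ballC': "ball c ((1 - lam) * r) \<subseteq> C'"
    proof
      fix x assume x: "x \<in> ball c ((1 - lam) * r)"
      define z where "z = c + (1 / (1 - lam)) *\<^sub>R (x - c)"
      have "dist c z = norm (x - c) / (1 - lam)" using lam by (simp add: z_def dist_norm)
      also have "\<dots> < r" using x lam by (simp add: dist_norm norm_minus_commute field_simps)
      finally have "z \<in> C" using cr(2) by auto
      moreover have "f z = x" using lam by (simp add: f_def z_def)
      ultimately show "x \<in> C'" using fC by metis
    qed
    have "convex_body C'"
    proof -
      have "convex C'" unfolding C'_def by (rule convex_Int[OF cC(2) convex_halfspace_le])
      moreover have "interior C' \<noteq> {}"
      proof -
        have "ball c ((1 - lam) * r) \<subseteq> interior C'"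
          by (rule interior_maximal[OF ballC' open_ball])
        moreover have "c \<in> ball c ((1 - lam) * r)" using lam cr(1) by simp
        ultimately show ?thesis by blast
      qed
      ultimately show ?thesis using cC' by (simp add: convex_body_def)
    qed
    moreover have "C' \<subset> C"
    proof -
      have "p \<notin> C'" using pC \<epsilon>(1) by (simp add: C'_def)
      then show ?thesis using pC(1) by (auto simp: C'_def)
    qed
    moreover have "lattice_width L C' = lattice_width L C"
    proof -
      have geq: "m \<le> width_in_dir C' y" if y: "y \<in> ?D" for y
      proof (cases "?w y = m")
        case True
        then have yW: "y \<in> W" using y by (simp add: W_def)
        have "fst (AB y) \<in> P0" "snd (AB y) \<in> P0" using yW by (auto simp: P0_def)
        then have "fst (AB y) \<in> C'" "snd (AB y) \<in> C'"
          using \<delta>le \<epsilon>(3) AB yW by (fastforce simp: C'_def)+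
        then have "y \<bullet> (fst (AB y) - snd (AB y)) \<le> width_in_dir C' y"
          by (rule width_props(2)[OF cC' C'ne])
        then show ?thesis using AB yW by fastforce
      next
        case False
        have w2y: "w2 \<le> ?w y" by (rule w2le[OF y False])
        obtain a0 b0 where ab0: "a0 \<in> C" "b0 \<in> C" "?w y = y \<bullet> (a0 - b0)"
          using width_props(1)[OF cC(1) CNE, of y] by blast
        have "y \<bullet> (f a0 - f b0) \<le> width_in_dir C' y"
          by (rule width_props(2)[OF cC' C'ne fC[OF ab0(1)] fC[OF ab0(2)]])
        moreover have "y \<bullet> (f a0 - f b0) = (1 - lam) * ?w y"
        proof -
          have "f a0 - f b0 = (1 - lam) *\<^sub>R (a0 - b0)" by (simp add: f_def algebra_simps)
          then have "y \<bullet> (f a0 - f b0) = (1 - lam) * (y \<bullet> (a0 - b0))" by simp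
          then show ?thesis using ab0(3) by simp
        qed
        moreover have "(1 - lam) * w2 \<le> (1 - lam) * ?w y"
          using w2y lam by (simp add: mult_left_mono)
        ultimately show ?thesis using lamw by linarith
      qed
      have "width_in_dir C' y1 \<le> ?w y1"
        by (rule width_mono[OF cC(1) cC' C'ne]) (simp add: C'_def)
      then have y1eq: "width_in_dir C' y1 = m" using geq[of y1] y1 FD by force
      have "lattice_width L C' = m"
        unfolding lattice_width_def
        by (rule cInf_eq_minimum) (use y1eq y1 FD geq in force)+
      then show ?thesis using LW by simp
    qed
    ultimately show False using R by (auto simp: lattice_reduced_def)
  qed
qed


theorem proposition3p1:
  fixes C L :: "'a::euclidean_space set"
  assumes "convex_body C" and "is_lattice L"
  shows "lattice_reduced L C \<longleftrightarrow>
    (\<forall>p. {p} exposed_face_of C \<longrightarrow>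
       (\<exists>y. width_direction L C y \<and> (\<forall>x\<in>C - {p}. y \<bullet> p > y \<bullet> x)))"
proof
  assume "lattice_reduced L C"
  then show "\<forall>p. {p} exposed_face_of C \<longrightarrow>
       (\<exists>y. width_direction L C y \<and> (\<forall>x\<in>C - {p}. y \<bullet> p > y \<bullet> x))"
    using dir_1_2[OF assms] by blast
next
  assume "\<forall>p. {p} exposed_face_of C \<longrightarrow>
       (\<exists>y. width_direction L C y \<and> (\<forall>x\<in>C - {p}. y \<bullet> p > y \<bullet> x))"
  then show "lattice_reduced L C" by (rule dir_2_1[OF assms(1)])
qed

end
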